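(* Let $T:M_d\to M_d$ be completely positive with $T(I)\le I$ and finite stabilization index $n_T$, and let $Q_T$ be its orbit-support projection. Suppose that for every nonzero projection $0\ne p\le Q_T$ we have $T(p)\ne0$. Then $T$ is corner-faithful, and hence $T$ is unital ($T(I)=I$).
   Context: $d(T)=I-T(I)$; the stabilization index is $n_T=\min\{n\ge1: T^n(d(T))=0\}$. For positive semidefinite $x$, $\mathrm{supp}(x)$ is the orthogonal projection onto the range of $x$. The orbit-support projection is $Q_T=\bigvee_{k<n_T}\mathrm{supp}(T^k(d(T)))$. $T$ is corner-faithful if every $x\ge0$, $x\ne0$ with $\mathrm{supp}(x)\le Q_T$ satisfies $T(x)\ne0$. *)

theory Defs
  imports "Jordan_Normal_Form.Schur_Decomposition"
begin

definition hermitian_mat :: "nat \<Rightarrow> complex mat \<Rightarrow> bool" where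
  "hermitian_mat n A \<longleftrightarrow> A \<in> carrier_mat n n \<and> mat_adjoint A = A"

definition psd_mat :: "nat \<Rightarrow> complex mat \<Rightarrow> bool" where
  "psd_mat n A \<longleftrightarrow> hermitian_mat n A \<and>
     (\<forall>v :: nat \<Rightarrow> complex. 0 \<le> Re (\<Sum>i<n. \<Sum>j<n. cnj (v i) * A $$ (i,j) * v j)
                           \<and> Im (\<Sum>i<n. \<Sum>j<n. cnj (v i) * A $$ (i,j) * v j) = 0)"

definition loewner_le :: "nat \<Rightarrow> complex mat \<Rightarrow> complex mat \<Rightarrow> bool" where
  "loewner_le n A B \<longleftrightarrow> A \<in> carrier_mat n n \<and> B \<in> carrier_mat n n \<and> psd_mat n (B - A)"

definition proj_mat :: "nat \<Rightarrow> complex mat \<Rightarrow> bool" where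
  "proj_mat n P \<longleftrightarrow> P \<in> carrier_mat n n \<and> P * P = P \<and> mat_adjoint P = P"

definition mat_range :: "nat \<Rightarrow> complex mat \<Rightarrow> complex vec set" where
  "mat_range n A = {A *\<^sub>v v | v. v \<in> carrier_vec n}"

definition supp :: "nat \<Rightarrow> complex mat \<Rightarrow> complex mat" where
  "supp n x = (THE P. proj_mat n P \<and> mat_range n P = mat_range n x)"

definition proj_join :: "nat \<Rightarrow> complex mat set \<Rightarrow> complex mat" where
  "proj_join n S = (THE Q. proj_mat n Q \<and> (\<forall>P\<in>S. loewner_le n P Q) \<and>
      (\<forall>R. proj_mat n R \<and> (\<forall>P\<in>S. loewner_le n P R) \<longrightarrow> loewner_le n Q R))"

definition linear_map_mat :: "nat \<Rightarrow> (complex mat \<Rightarrow> complex mat) \<Rightarrow> bool" where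
  "linear_map_mat n T \<longleftrightarrow>
     (\<forall>A\<in>carrier_mat n n. T A \<in> carrier_mat n n) \<and>
     (\<forall>A\<in>carrier_mat n n. \<forall>B\<in>carrier_mat n n. T (A + B) = T A + T B) \<and>
     (\<forall>A\<in>carrier_mat n n. \<forall>c. T (c \<cdot>\<^sub>m A) = c \<cdot>\<^sub>m T A)"

definition mat_block :: "nat \<Rightarrow> nat \<Rightarrow> nat \<Rightarrow> complex mat \<Rightarrow> complex mat" where
  "mat_block n a b X = mat n n (\<lambda>(r,s). X $$ (a*n + r, b*n + s))"

(* ampliation id_k \<otimes> T acting blockwise on M_k(M_n) \<cong> M_{kn} *)
definition ampliation :: "nat \<Rightarrow> nat \<Rightarrow> (complex mat \<Rightarrow> complex mat) \<Rightarrow> complex mat \<Rightarrow> complex mat" where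
  "ampliation k n T X = mat (k*n) (k*n)
     (\<lambda>(i,j). T (mat_block n (i div n) (j div n) X) $$ (i mod n, j mod n))"

definition completely_positive :: "nat \<Rightarrow> (complex mat \<Rightarrow> complex mat) \<Rightarrow> bool" where
  "completely_positive n T \<longleftrightarrow> linear_map_mat n T \<and>
     (\<forall>k\<ge>1. \<forall>X. psd_mat (k*n) X \<longrightarrow> psd_mat (k*n) (ampliation k n T X))"

definition defect :: "nat \<Rightarrow> (complex mat \<Rightarrow> complex mat) \<Rightarrow> complex mat" where
  "defect n T = 1\<^sub>m n - T (1\<^sub>m n)"

definition finite_stab_index :: "nat \<Rightarrow> (complex mat \<Rightarrow> complex mat) \<Rightarrow> bool" where
  "finite_stab_index n T \<longleftrightarrow> (\<exists>m\<ge>1. (T ^^ m) (defect n T) = 0\<^sub>m n n)"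

definition stab_index :: "nat \<Rightarrow> (complex mat \<Rightarrow> complex mat) \<Rightarrow> nat" where
  "stab_index n T = (LEAST m. m \<ge> 1 \<and> (T ^^ m) (defect n T) = 0\<^sub>m n n)"

definition orbit_support :: "nat \<Rightarrow> (complex mat \<Rightarrow> complex mat) \<Rightarrow> complex mat" where
  "orbit_support n T = proj_join n {supp n ((T ^^ k) (defect n T)) | k. k < stab_index n T}"

definition corner_faithful :: "nat \<Rightarrow> (complex mat \<Rightarrow> complex mat) \<Rightarrow> bool" where
  "corner_faithful n T \<longleftrightarrow>
     (\<forall>x. psd_mat n x \<and> x \<noteq> 0\<^sub>m n n \<and> loewner_le n (supp n x) (orbit_support n T)
          \<longrightarrow> T x \<noteq> 0\<^sub>m n n)"

end

theory Submission
  imports Defs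
begin

lemma adj_carrier[simp]: "A \<in> carrier_mat n m \<Longrightarrow> mat_adjoint A \<in> carrier_mat m n"
  by (auto simp: mat_adjoint_def mat_of_rows_def)

lemma adj_dims: "dim_row (mat_adjoint A) = dim_col A" "dim_col (mat_adjoint A) = dim_row A"
  by (auto simp: mat_adjoint_def mat_of_rows_def)

lemma adj_index[simp]: "A \<in> carrier_mat n m \<Longrightarrow> i < m \<Longrightarrow> j < n \<Longrightarrow> mat_adjoint A $$ (i,j) = cnj (A $$ (j,i))"
  by (auto simp: mat_adjoint_def mat_of_rows_def)

lemma adj_index2[simp]: "i < dim_col A \<Longrightarrow> j < dim_row A \<Longrightarrow> mat_adjoint A $$ (i,j) = cnj (A $$ (j,i))"
  by (auto simp: mat_adjoint_def mat_of_rows_def)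

declare minus_carrier_mat[simp]

lemma row_dot: "A \<in> carrier_mat n k \<Longrightarrow> v \<in> carrier_vec k \<Longrightarrow> i < n \<Longrightarrow>
   row A i \<bullet> v = (\<Sum>l<k. A $$ (i,l) * v $ l)"
  by (auto simp: scalar_prod_def atLeast0LessThan intro!: sum.cong)

lemma rowcol_dot: "A \<in> carrier_mat n k \<Longrightarrow> B \<in> carrier_mat k m \<Longrightarrow> i < n \<Longrightarrow> j < m \<Longrightarrow>
   row A i \<bullet> col B j = (\<Sum>l<k. A $$ (i,l) * B $$ (l,j))"
  by (auto simp: scalar_prod_def atLeast0LessThan intro!: sum.cong)

lemma mult_idx: "A \<in> carrier_mat n k \<Longrightarrow> B \<in> carrier_mat k m \<Longrightarrow> i < n \<Longrightarrow> j < m \<Longrightarrow>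
   (A * B) $$ (i,j) = (\<Sum>l<k. A $$ (i,l) * B $$ (l,j))"
  by (auto simp: scalar_prod_def atLeast0LessThan intro!: sum.cong)

lemma mult_vec_idx: "A \<in> carrier_mat n k \<Longrightarrow> v \<in> carrier_vec k \<Longrightarrow> i < n \<Longrightarrow>
   (A *\<^sub>v v) $ i = (\<Sum>l<k. A $$ (i,l) * v $ l)"
  by (auto simp: scalar_prod_def atLeast0LessThan intro!: sum.cong)

lemma cscalar_def': "v \<in> carrier_vec n \<Longrightarrow> w \<in> carrier_vec n \<Longrightarrow> v \<bullet>c w = (\<Sum>i<n. v $ i * cnj (w $ i))"
  by (auto simp: scalar_prod_def atLeast0LessThan intro!: sum.cong)

lemma herm_iff: "hermitian_mat n A \<longleftrightarrow> A \<in> carrier_mat n n \<and> (\<forall>i<n. \<forall>j<n. A $$ (i,j) = cnj (A $$ (j,i)))"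
  unfolding hermitian_mat_def
proof safe
  fix i j assume A: "A \<in> carrier_mat n n" and e: "mat_adjoint A = A" and ij: "i < n" "j < n"
  have "mat_adjoint A $$ (i,j) = cnj (A $$ (j,i))" using A ij by (rule adj_index)
  then show "A $$ (i, j) = cnj (A $$ (j, i))" using e by simp
next
  assume A: "A \<in> carrier_mat n n" and h: "\<forall>i<n. \<forall>j<n. A $$ (i, j) = cnj (A $$ (j, i))"
  have c: "mat_adjoint A \<in> carrier_mat n n" using A by (rule adj_carrier)
  show "mat_adjoint A = A"
  proof (rule eq_matI)
    show "dim_row (mat_adjoint A) = dim_row A" "dim_col (mat_adjoint A) = dim_col A" using A by (auto simp: adj_dims)
    fix i j assume "i < dim_row A" "j < dim_col A"
    then have ij: "i < n" "j < n" using A by auto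
    have e: "mat_adjoint A $$ (i,j) = cnj (A $$ (j,i))" using A ij by (rule adj_index)
    have hij: "A $$ (i,j) = cnj (A $$ (j,i))" using h ij by blast
    show "mat_adjoint A $$ (i,j) = A $$ (i,j)" by (rule trans[OF e sym[OF hij]])
  qed
qed

lemma herm_cnj: "hermitian_mat n A \<Longrightarrow> i < n \<Longrightarrow> j < n \<Longrightarrow> cnj (A $$ (i,j)) = A $$ (j,i)"
  unfolding herm_iff by (metis complex_cnj_cnj)

lemma herm_carrier: "hermitian_mat n A \<Longrightarrow> A \<in> carrier_mat n n"
  unfolding hermitian_mat_def by blast

lemma psd_carrier: "psd_mat n A \<Longrightarrow> A \<in> carrier_mat n n"
  unfolding psd_mat_def hermitian_mat_def by blast

lemma psd_herm: "psd_mat n A \<Longrightarrow> hermitian_mat n A"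
  unfolding psd_mat_def by blast

lemma adj_mult: fixes A B :: "complex mat" assumes A: "A \<in> carrier_mat n k" and B: "B \<in> carrier_mat k m"
  shows "mat_adjoint (A * B) = mat_adjoint B * mat_adjoint A"
proof (rule eq_matI)
  show "dim_row (mat_adjoint (A * B)) = dim_row (mat_adjoint B * mat_adjoint A)"
    using A B by (simp add: adj_dims)
  show "dim_col (mat_adjoint (A * B)) = dim_col (mat_adjoint B * mat_adjoint A)"
    using A B by (simp add: adj_dims)
  fix i j assume i: "i < dim_row (mat_adjoint B * mat_adjoint A)" and j: "j < dim_col (mat_adjoint B * mat_adjoint A)"
  have i': "i < m" and j': "j < n" using i j A B by (auto simp: adj_dims)
  have AB: "A * B \<in> carrier_mat n m" using A B by simp
  have e1: "mat_adjoint (A * B) $$ (i,j) = cnj ((A*B) $$ (j,i))"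
    using AB i' j' by (rule adj_index)
  have e2: "(A*B) $$ (j,i) = (\<Sum>l<k. A $$ (j,l) * B $$ (l,i))"
    using A B j' i' by (rule mult_idx)
  have e3: "cnj (\<Sum>l<k. A $$ (j,l) * B $$ (l,i)) = (\<Sum>l<k. cnj (B $$ (l,i)) * cnj (A $$ (j,l)))"
    unfolding cnj_sum complex_cnj_mult by (simp add: mult.commute)
  have e4: "(\<Sum>l<k. cnj (B $$ (l,i)) * cnj (A $$ (j,l))) = (\<Sum>l<k. mat_adjoint B $$ (i,l) * mat_adjoint A $$ (l,j))"
    by (intro sum.cong refl, insert A B i' j', simp)
  have e5: "(\<Sum>l<k. mat_adjoint B $$ (i,l) * mat_adjoint A $$ (l,j)) = (mat_adjoint B * mat_adjoint A) $$ (i,j)"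
    by (intro mult_idx[symmetric], insert A B i' j', auto)
  show "mat_adjoint (A * B) $$ (i, j) = (mat_adjoint B * mat_adjoint A) $$ (i, j)"
    unfolding e1 e2 e3 e4 e5 ..
qed


definition sf :: "nat \<Rightarrow> complex mat \<Rightarrow> (nat \<Rightarrow> complex) \<Rightarrow> (nat \<Rightarrow> complex) \<Rightarrow> complex" where
  "sf n A a b = (\<Sum>i<n. \<Sum>j<n. cnj (a i) * A $$ (i,j) * b j)"

definition dl :: "nat \<Rightarrow> nat \<Rightarrow> complex" where "dl i k = (if k = i then 1 else 0)"

lemma psd_iff: "psd_mat n A \<longleftrightarrow> hermitian_mat n A \<and> (\<forall>v. 0 \<le> sf n A v v)"
  unfolding psd_mat_def sf_def less_eq_complex_def by auto

lemma sf_cong: "(\<And>i j. i<n \<Longrightarrow> j<n \<Longrightarrow> A$$(i,j) = B$$(i,j)) \<Longrightarrow> sf n A a b = sf n B a b"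
  unfolding sf_def by (intro sum.cong refl) auto

lemma sf_lin: assumes "\<And>i j. i<n \<Longrightarrow> j<n \<Longrightarrow> A$$(i,j) = c * B$$(i,j) + e * C$$(i,j)"
  shows "sf n A a b = c * sf n B a b + e * sf n C a b"
proof -
  have "sf n A a b = (\<Sum>i<n. \<Sum>j<n. c * (cnj (a i) * B$$(i,j) * b j) + e * (cnj (a i) * C$$(i,j) * b j))"
    unfolding sf_def by (intro sum.cong refl) (simp add: assms algebra_simps)
  also have "\<dots> = c * sf n B a b + e * sf n C a b"
    unfolding sf_def by (simp add: sum.distrib sum_distrib_left)
  finally show ?thesis .
qed

lemma sf_herm: assumes "hermitian_mat n A" shows "sf n A b a = cnj (sf n A a b)"
proof -
  have h: "\<And>i j. i<n \<Longrightarrow> j<n \<Longrightarrow> cnj (A $$ (i,j)) = A $$ (j,i)" using assms by (simp add: herm_cnj)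
  have "cnj (sf n A a b) = (\<Sum>i<n. \<Sum>j<n. a i * cnj (A $$ (i,j)) * cnj (b j))"
    unfolding sf_def cnj_sum by simp
  also have "\<dots> = (\<Sum>i<n. \<Sum>j<n. cnj (b j) * A $$ (j,i) * a i)"
    by (intro sum.cong refl) (simp add: h mult.commute mult.left_commute)
  also have "\<dots> = sf n A b a"
    unfolding sf_def by (rule sum.swap)
  finally show ?thesis by simp
qed

lemma sf_expand: "sf n A (\<lambda>i. a i + t * b i) (\<lambda>i. a i + t * b i) =
   sf n A a a + t * sf n A a b + cnj t * sf n A b a + cnj t * t * sf n A b b"
proof -
  have e: "\<And>i j. cnj (a i + t * b i) * A$$(i,j) * (a j + t * b j) =
     cnj (a i) * A$$(i,j) * a j + t * (cnj (a i) * A$$(i,j) * b j) + cnj t * (cnj (b i) * A$$(i,j) * a j)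
     + cnj t * t * (cnj (b i) * A$$(i,j) * b j)"
    by (simp add: algebra_simps)
  show ?thesis unfolding sf_def e by (simp add: sum.distrib sum_distrib_left)
qed

lemma sf_dl: assumes "i < n" "j < n" shows "sf n A (dl i) (dl j) = A $$ (i,j)"
proof -
  have e: "\<And>k l. cnj (dl i k) * A$$(k,l) * dl j l = (if k = i then (if l = j then A $$ (i,j) else 0) else 0)"
    by (simp add: dl_def)
  have "(\<Sum>k<n. \<Sum>l<n. if k = i then if l = j then A $$ (i,j) else 0 else 0) = (\<Sum>k<n. if k = i then A $$ (i,j) else 0)"
    by (intro sum.cong refl) (use assms in auto)
  also have "\<dots> = A $$ (i,j)" using assms by simp
  finally show ?thesis unfolding sf_def e .
qed

lemma psd_null: assumes psd: "psd_mat n A" and z: "sf n A b b = 0" shows "sf n A a b = 0"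
proof (rule ccontr)
  define s where "s = sf n A a b"
  assume "sf n A a b \<noteq> 0"
  then have s0: "s \<noteq> 0" by (simp add: s_def)
  have herm: "hermitian_mat n A" using psd by (rule psd_herm)
  have pos: "\<And>v. 0 \<le> sf n A v v" using psd unfolding psd_iff by blast
  have ba: "sf n A b a = cnj s" unfolding s_def by (rule sf_herm[OF herm])
  have sq: "cnj s * s = of_real ((cmod s)^2)" by (metis complex_norm_square mult.commute)
  have cs: "(cmod s)^2 > 0" using s0 by simp
  define r where "r = (Re (sf n A a a) + 1) / (2 * (cmod s)^2)"
  define t where "t = - of_real r * cnj s"
  have "0 \<le> sf n A (\<lambda>i. a i + t * b i) (\<lambda>i. a i + t * b i)" by (rule pos)
  also have "\<dots> = sf n A a a + t * s + cnj t * cnj s"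
    unfolding sf_expand ba z s_def[symmetric] by simp
  also have "\<dots> = sf n A a a - of_real (2 * r * (cmod s)^2)"
    unfolding t_def using sq by (simp add: algebra_simps)
  also have "\<dots> = sf n A a a - of_real (Re (sf n A a a) + 1)"
    using cs by (simp add: r_def field_simps)
  finally have "0 \<le> sf n A a a - of_real (Re (sf n A a a) + 1)" .
  then show False by (simp add: less_eq_complex_def)
qed

lemma psd_zero: assumes psd: "psd_mat n A" and d: "\<And>i. i < n \<Longrightarrow> A $$ (i,i) = 0"
  shows "A = 0\<^sub>m n n"
proof (rule eq_matI)
  have c: "A \<in> carrier_mat n n" using psd by (rule psd_carrier)
  then show "dim_row A = dim_row (0\<^sub>m n n)" "dim_col A = dim_col (0\<^sub>m n n)" by auto
  fix i j assume "i < dim_row (0\<^sub>m n n)" "j < dim_col (0\<^sub>m n n)"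
  then have ij: "i < n" "j < n" by auto
  have "sf n A (dl j) (dl j) = 0" using ij d by (simp add: sf_dl)
  then have "sf n A (dl i) (dl j) = 0" by (rule psd_null[OF psd])
  then show "A $$ (i,j) = 0\<^sub>m n n $$ (i,j)" using ij by (simp add: sf_dl)
qed

lemma psd_diag_nonneg: assumes psd: "psd_mat n A" and i: "i < n" shows "0 \<le> A $$ (i,i)"
  using psd i by (metis psd_iff sf_dl)

lemma psd_nonzero: assumes psd: "psd_mat n A" and nz: "A \<noteq> 0\<^sub>m n n"
  shows "\<exists>j<n. 0 < Re (A $$ (j,j)) \<and> A $$ (j,j) = of_real (Re (A $$ (j,j)))"
proof -
  obtain j where j: "j < n" "A $$ (j,j) \<noteq> 0" using psd_zero[OF psd] nz by blast
  have "0 \<le> A $$ (j,j)" by (rule psd_diag_nonneg[OF psd j(1)])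
  then have "0 \<le> Re (A $$ (j,j))" "Im (A $$ (j,j)) = 0" by (auto simp: less_eq_complex_def)
  moreover have "Re (A $$ (j,j)) \<noteq> 0" using j(2) \<open>Im (A $$ (j,j)) = 0\<close> complex_eq_iff by force
  ultimately show ?thesis using j(1) by (intro exI[of _ j]) (auto simp: complex_eq_iff)
qed


lemma mat_minus_eq: "A \<in> carrier_mat n n \<Longrightarrow> B \<in> carrier_mat n n \<Longrightarrow> A - B = A + (-1::complex) \<cdot>\<^sub>m B"
  by (intro eq_matI) auto

lemma lin_carrier: "linear_map_mat n T \<Longrightarrow> A \<in> carrier_mat n n \<Longrightarrow> T A \<in> carrier_mat n n"
  unfolding linear_map_mat_def by blast
lemma lin_add: "linear_map_mat n T \<Longrightarrow> A \<in> carrier_mat n n \<Longrightarrow> B \<in> carrier_mat n n \<Longrightarrow> T (A + B) = T A + T B"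
  unfolding linear_map_mat_def by blast
lemma lin_smult: "linear_map_mat n T \<Longrightarrow> A \<in> carrier_mat n n \<Longrightarrow> T (c \<cdot>\<^sub>m A) = c \<cdot>\<^sub>m T A"
  unfolding linear_map_mat_def by blast

lemma lin_minus: assumes L: "linear_map_mat n T" and A: "A \<in> carrier_mat n n" and B: "B \<in> carrier_mat n n"
  shows "T (A - B) = T A - T B"
proof -
  have "T (A - B) = T (A + (-1) \<cdot>\<^sub>m B)" using A B by (simp add: mat_minus_eq)
  also have "\<dots> = T A + T ((-1) \<cdot>\<^sub>m B)" using L A B by (intro lin_add) auto
  also have "\<dots> = T A + (-1) \<cdot>\<^sub>m T B" using L B by (simp add: lin_smult)
  also have "\<dots> = T A - T B" using lin_carrier[OF L A] lin_carrier[OF L B] by (intro mat_minus_eq[symmetric])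
  finally show ?thesis .
qed

lemma lin_zero: assumes L: "linear_map_mat n T" shows "T (0\<^sub>m n n) = 0\<^sub>m n n"
proof -
  have "T (0\<^sub>m n n) = T ((0::complex) \<cdot>\<^sub>m 0\<^sub>m n n)" by simp
  also have "\<dots> = (0::complex) \<cdot>\<^sub>m T (0\<^sub>m n n)" using L by (intro lin_smult) auto
  also have "\<dots> = 0\<^sub>m n n" using lin_carrier[OF L, of "0\<^sub>m n n"] by (intro eq_matI) auto
  finally show ?thesis .
qed

lemma lin_pow_zero: assumes L: "linear_map_mat n T" shows "(T ^^ k) (0\<^sub>m n n) = 0\<^sub>m n n"
  by (induction k) (auto simp: lin_zero[OF L])

lemma lin_pow_carrier: assumes L: "linear_map_mat n T" and A: "A \<in> carrier_mat n n"
  shows "(T ^^ k) A \<in> carrier_mat n n"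
  by (induction k) (auto simp: lin_carrier[OF L] A)

lemma cp_lin: "completely_positive n T \<Longrightarrow> linear_map_mat n T"
  unfolding completely_positive_def by blast

lemma cp_psd: assumes cp: "completely_positive n T" and X: "psd_mat n X" shows "psd_mat n (T X)"
proof -
  have L: "linear_map_mat n T" using cp by (rule cp_lin)
  have Xc: "X \<in> carrier_mat n n" using X by (rule psd_carrier)
  have TXc: "T X \<in> carrier_mat n n" using L Xc by (rule lin_carrier)
  have "psd_mat (1*n) (ampliation 1 n T X)" using cp X unfolding completely_positive_def by auto
  moreover have mb: "mat_block n 0 0 X = X" using Xc by (intro eq_matI) (auto simp: mat_block_def)
  have "ampliation 1 n T X = T X"
  proof (rule eq_matI)
    show "dim_row (ampliation 1 n T X) = dim_row (T X)" "dim_col (ampliation 1 n T X) = dim_col (T X)"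
      using TXc by (auto simp: ampliation_def)
    fix i j assume "i < dim_row (T X)" "j < dim_col (T X)"
    then have ij: "i < n" "j < n" using TXc by auto
    then show "ampliation 1 n T X $$ (i, j) = T X $$ (i, j)"
      using mb by (simp add: ampliation_def)
  qed
  ultimately show ?thesis by simp
qed

lemma cp_pow_psd: assumes cp: "completely_positive n T" and X: "psd_mat n X" shows "psd_mat n ((T ^^ k) X)"
  by (induction k) (auto simp: X cp_psd[OF cp])

definition opm :: "nat \<Rightarrow> complex vec \<Rightarrow> complex mat" where
  "opm n w = mat n n (\<lambda>(i,k). w $ i * cnj (w $ k))"

lemma opm_carrier[simp]: "opm n w \<in> carrier_mat n n" by (simp add: opm_def)

lemma opm_dims[simp]: "dim_row (opm n w) = n" "dim_col (opm n w) = n" by (simp_all add: opm_def)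

lemma opm_index[simp]: "i < n \<Longrightarrow> k < n \<Longrightarrow> opm n w $$ (i,k) = w $ i * cnj (w $ k)"
  by (simp add: opm_def)

lemma cs_bound:
  assumes psd: "psd_mat n x" and j: "j < n" and dpos: "0 < Re (x $$ (j,j))"
  shows "psd_mat n ((x $$ (j,j) / (col x j \<bullet>c col x j)) \<cdot>\<^sub>m x - (1 / (col x j \<bullet>c col x j)) \<cdot>\<^sub>m opm n (col x j))"
proof -
  have xc: "x \<in> carrier_mat n n" using psd by (rule psd_carrier)
  have herm: "hermitian_mat n x" using psd by (rule psd_herm)
  have pos: "\<And>v. 0 \<le> sf n x v v" using psd unfolding psd_iff by blast
  define u where "u = col x j"
  have uc: "u \<in> carrier_vec n" using xc j by (simp add: u_def)
  have ui: "\<And>k. k < n \<Longrightarrow> u $ k = x $$ (k,j)" using xc j by (simp add: u_def)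
  define dr where "dr = Re (x $$ (j,j))"
  have dr0: "dr > 0" "dr \<noteq> 0" using dpos by (auto simp: dr_def)
  have d: "x $$ (j,j) = of_real dr"
    using psd_diag_nonneg[OF psd j] by (simp add: less_eq_complex_def complex_eq_iff dr_def)
  define Nr where "Nr = (\<Sum>k<n. (cmod (u $ k))^2)"
  have N: "u \<bullet>c u = of_real Nr"
  proof -
    have "u \<bullet>c u = (\<Sum>k<n. u $ k * cnj (u $ k))" by (rule cscalar_def'[OF uc uc])
    also have "\<dots> = (\<Sum>k<n. of_real ((cmod (u $ k))^2))" by (intro sum.cong refl) (metis complex_norm_square)
    also have "\<dots> = of_real Nr" by (simp add: Nr_def)
    finally show ?thesis .
  qed
  have le: "(cmod (u $ j))^2 \<le> Nr" unfolding Nr_def by (rule member_le_sum) (use j in auto)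
  have uj: "cmod (u $ j) = dr" using ui j d dr0 by simp
  have "0 < (cmod (u $ j))^2" using uj dr0 by simp
  then have Npos: "Nr > 0" "Nr \<noteq> 0" using le by linarith+
  define s where "s a = (\<Sum>k<n. x $$ (j,k) * a k)" for a :: "nat \<Rightarrow> complex"
  have sf_ja: "sf n x (dl j) a = s a" for a
  proof -
    have e: "\<And>i k. cnj (dl j i) * x$$(i,k) * a k = (if i = j then x$$(j,k) * a k else 0)"
      by (simp add: dl_def)
    have "sf n x (dl j) a = (\<Sum>i<n. if i = j then s a else 0)"
      unfolding sf_def e s_def by (intro sum.cong refl) auto
    also have "\<dots> = s a" using j by simp
    finally show ?thesis .
  qed
  have sf_aj: "sf n x a (dl j) = cnj (s a)" for a
  proof -
    have "sf n x a (dl j) = cnj (sf n x (dl j) a)" by (rule sf_herm[OF herm])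
    then show ?thesis using sf_ja by simp
  qed
  have sf_jj: "sf n x (dl j) (dl j) = of_real dr" using sf_dl[OF j j] d by simp
  have cs: "(cmod (s a))^2 \<le> dr * Re (sf n x a a)" for a
  proof -
    define t where "t = - s a / of_real dr"
    define \<sigma> where "\<sigma> = (cmod (s a))^2"
    have sq: "s a * cnj (s a) = of_real \<sigma>" unfolding \<sigma>_def by (metis complex_norm_square)
    have sq': "cnj (s a) * s a = of_real \<sigma>" using sq by (simp add: mult.commute)
    have ct: "cnj t = - cnj (s a) / of_real dr" unfolding t_def by simp
    have t1: "t * cnj (s a) = - of_real (\<sigma> / dr)"
    proof -
      have "t * cnj (s a) = - (s a * cnj (s a)) / of_real dr" unfolding t_def by simp
      then show ?thesis using sq by simp
    qed
    have t2: "cnj t * s a = - of_real (\<sigma> / dr)"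
    proof -
      have "cnj t * s a = - (cnj (s a) * s a) / of_real dr" unfolding ct by simp
      then show ?thesis using sq' by simp
    qed
    have t3: "cnj t * t * of_real dr = of_real (\<sigma> / dr)"
    proof -
      have "cnj t * t * of_real dr = (cnj (s a) * s a) / of_real dr" unfolding ct t_def using dr0
        by (simp add: field_simps power2_eq_square)
      then show ?thesis using sq' by simp
    qed
    have "0 \<le> sf n x (\<lambda>i. a i + t * dl j i) (\<lambda>i. a i + t * dl j i)" by (rule pos)
    also have "\<dots> = sf n x a a + t * cnj (s a) + cnj t * s a + cnj t * t * of_real dr"
      unfolding sf_expand sf_jj unfolding sf_aj sf_ja ..
    also have "\<dots> = sf n x a a - of_real (\<sigma> / dr)"
      unfolding t1 t2 t3 by simp
    finally have "0 \<le> sf n x a a - of_real (\<sigma> / dr)" .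
    then have "\<sigma> / dr \<le> Re (sf n x a a)" by (simp add: less_eq_complex_def)
    then show ?thesis using dr0 by (simp add: \<sigma>_def pos_divide_le_eq mult.commute)
  qed
  define M where "M = (x $$ (j,j) / (u \<bullet>c u)) \<cdot>\<^sub>m x - (1 / (u \<bullet>c u)) \<cdot>\<^sub>m opm n u"
  have c1: "x $$ (j,j) / (u \<bullet>c u) = of_real (dr / Nr)" using d N by simp
  have c2: "1 / (u \<bullet>c u) = of_real (1 / Nr)" using N by simp
  have Mi: "M $$ (i,k) = of_real (dr / Nr) * x $$ (i,k) + (- of_real (1 / Nr)) * opm n u $$ (i,k)"
    if "i < n" "k < n" for i k
    using that xc unfolding M_def c1 c2 by simp
  have Mc: "M \<in> carrier_mat n n" using xc unfolding M_def by simp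
  have hM: "hermitian_mat n M"
    unfolding herm_iff
  proof (intro conjI allI impI Mc)
    fix i k assume ik: "i < n" "k < n"
    show "M $$ (i,k) = cnj (M $$ (k,i))"
      unfolding Mi[OF ik] Mi[OF ik(2) ik(1)] using ik
      by (simp add: herm_cnj[OF herm] mult.commute)
  qed
  have sfM: "0 \<le> sf n M a a" for a
  proof -
    have e0: "sf n M a a = of_real (dr / Nr) * sf n x a a + (- of_real (1 / Nr)) * sf n (opm n u) a a"
      by (rule sf_lin) (rule Mi)
    have e1: "sf n (opm n u) a a = (\<Sum>i<n. \<Sum>k<n. (cnj (a i) * u $ i) * (cnj (u $ k) * a k))"
      unfolding sf_def by (intro sum.cong refl) (simp add: mult_ac)
    have e2: "(\<Sum>k<n. cnj (u $ k) * a k) = s a"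
      unfolding s_def by (intro sum.cong refl) (simp add: ui herm_cnj[OF herm] j)
    have e3: "(\<Sum>i<n. cnj (a i) * u $ i) = cnj (s a)"
      unfolding s_def cnj_sum by (intro sum.cong refl) (simp add: ui herm_cnj[OF herm] j mult.commute)
    have e4: "sf n (opm n u) a a = cnj (s a) * s a"
    proof -
      have "sf n (opm n u) a a = (\<Sum>i<n. \<Sum>k<n. (cnj (a i) * u $ i) * (cnj (u $ k) * a k))" by (rule e1)
      also have "\<dots> = (\<Sum>i<n. cnj (a i) * u $ i) * (\<Sum>k<n. cnj (u $ k) * a k)" by (rule sum_product[symmetric])
      also have "\<dots> = cnj (s a) * s a" unfolding e2 e3 ..
      finally show ?thesis .
    qed
    have sq': "cnj (s a) * s a = of_real ((cmod (s a))^2)" by (metis complex_norm_square mult.commute)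
    have saa: "sf n x a a = of_real (Re (sf n x a a))"
      using pos[of a] by (simp add: less_eq_complex_def complex_eq_iff)
    have "sf n M a a = of_real (dr / Nr * Re (sf n x a a) - (cmod (s a))^2 / Nr)"
      unfolding e0 e4 sq' by (subst saa) (simp add: algebra_simps)
    moreover have "0 \<le> dr / Nr * Re (sf n x a a) - (cmod (s a))^2 / Nr"
      using cs[of a] Npos by (simp add: field_simps)
    ultimately show ?thesis by (simp add: less_eq_complex_def)
  qed
  have "psd_mat n M" unfolding psd_iff using hM sfM by blast
  then show ?thesis unfolding M_def u_def .
qed


lemma mv_unit: fixes A :: "complex mat" shows "A \<in> carrier_mat n n \<Longrightarrow> i < n \<Longrightarrow> j < n \<Longrightarrow> (A *\<^sub>v unit_vec n j) $ i = A $$ (i,j)"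
  by simp

lemma mat_ext: fixes A B :: "complex mat" assumes A: "A \<in> carrier_mat n n" and B: "B \<in> carrier_mat n n"
  and e: "\<And>v. v \<in> carrier_vec n \<Longrightarrow> A *\<^sub>v v = B *\<^sub>v v" shows "A = B"
proof (rule eq_matI)
  show "dim_row A = dim_row B" "dim_col A = dim_col B" using A B by auto
  fix i j assume "i < dim_row B" "j < dim_col B"
  then have ij: "i < n" "j < n" using B by auto
  have "A $$ (i,j) = (A *\<^sub>v unit_vec n j) $ i" using A ij by simp
  also have "\<dots> = (B *\<^sub>v unit_vec n j) $ i" using e[of "unit_vec n j"] by simp
  also have "\<dots> = B $$ (i,j)" using B ij by simp
  finally show "A $$ (i,j) = B $$ (i,j)" .
qed

lemma vec_eta: fixes v :: "complex vec" shows "v \<in> carrier_vec n \<Longrightarrow> vec n (\<lambda>i. v $ i) = v"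
  by (intro eq_vecI) auto

lemma vsub_self: fixes v :: "complex vec" shows "v \<in> carrier_vec n \<Longrightarrow> v - v = 0\<^sub>v n"
  by (intro eq_vecI) auto

lemma vsub_eq0: fixes a b :: "complex vec" shows "a \<in> carrier_vec n \<Longrightarrow> b \<in> carrier_vec n \<Longrightarrow> a - b = 0\<^sub>v n \<Longrightarrow> a = b"
  by (metis carrier_vecD index_minus_vec(1) index_zero_vec(1) eq_vecI eq_iff_diff_eq_0)

lemma herm_move: assumes h: "hermitian_mat n A" and v: "v \<in> carrier_vec n" and w: "w \<in> carrier_vec n"
  shows "(A *\<^sub>v v) \<bullet>c w = v \<bullet>c (A *\<^sub>v w)"
proof -
  have Ac: "A \<in> carrier_mat n n" using h by (rule herm_carrier)
  have "(A *\<^sub>v v) \<bullet>c w = (\<Sum>i<n. (\<Sum>l<n. A$$(i,l) * v$l) * cnj (w$i))"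
    using Ac v w by (simp add: cscalar_def'[of _ n] row_dot[OF Ac v])
  also have "\<dots> = (\<Sum>i<n. \<Sum>l<n. v$l * (A$$(i,l) * cnj (w$i)))"
    by (simp add: sum_distrib_left sum_distrib_right mult_ac)
  also have "\<dots> = (\<Sum>l<n. \<Sum>i<n. v$l * (A$$(i,l) * cnj (w$i)))"
    by (rule sum.swap)
  also have "\<dots> = (\<Sum>l<n. v$l * cnj (\<Sum>i<n. A$$(l,i) * w$i))"
    by (intro sum.cong refl) (simp add: sum_distrib_left cnj_sum herm_cnj[OF h])
  also have "\<dots> = v \<bullet>c (A *\<^sub>v w)"
    using Ac v w by (simp add: cscalar_def'[of _ n] row_dot[OF Ac w])
  finally show ?thesis .
qed

lemma proj_carrier: "proj_mat n P \<Longrightarrow> P \<in> carrier_mat n n" unfolding proj_mat_def by blast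
lemma proj_idem: "proj_mat n P \<Longrightarrow> P * P = P" unfolding proj_mat_def by blast
lemma proj_herm: "proj_mat n P \<Longrightarrow> hermitian_mat n P" unfolding proj_mat_def hermitian_mat_def by blast
lemma proj_adj: "proj_mat n P \<Longrightarrow> mat_adjoint P = P" unfolding proj_mat_def by blast

lemma proj_idem_vec: assumes P: "proj_mat n P" and v: "v \<in> carrier_vec n"
  shows "P *\<^sub>v (P *\<^sub>v v) = P *\<^sub>v v"
proof -
  have Pc: "P \<in> carrier_mat n n" using P by (rule proj_carrier)
  have "P *\<^sub>v (P *\<^sub>v v) = (P * P) *\<^sub>v v" using Pc v by (simp add: assoc_mult_mat_vec)
  then show ?thesis using proj_idem[OF P] by simp
qed

lemma proj_sq: assumes P: "proj_mat n P" and v: "v \<in> carrier_vec n"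
  shows "(P *\<^sub>v v) \<bullet>c v = (P *\<^sub>v v) \<bullet>c (P *\<^sub>v v)"
proof -
  have Pc: "P \<in> carrier_mat n n" using P by (rule proj_carrier)
  have "(P *\<^sub>v v) \<bullet>c v = (P *\<^sub>v (P *\<^sub>v v)) \<bullet>c v" using proj_idem_vec[OF P v] by simp
  also have "\<dots> = (P *\<^sub>v v) \<bullet>c (P *\<^sub>v v)" by (rule herm_move[OF proj_herm[OF P]]) (use Pc v in auto)
  finally show ?thesis .
qed

lemma sf_vec: assumes Ac: "A \<in> carrier_mat n n" shows "sf n A a a = (A *\<^sub>v vec n a) \<bullet>c vec n a"
proof -
  have "(A *\<^sub>v vec n a) \<bullet>c vec n a = (\<Sum>i<n. (\<Sum>j<n. A$$(i,j) * a j) * cnj (a i))"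
    using Ac by (simp add: cscalar_def'[of _ n] row_dot[OF Ac])
  also have "\<dots> = sf n A a a" unfolding sf_def by (simp add: sum_distrib_left sum_distrib_right mult_ac)
  finally show ?thesis by simp
qed

lemma psd_vec: assumes "psd_mat n A" and v: "v \<in> carrier_vec n" shows "0 \<le> (A *\<^sub>v v) \<bullet>c v"
proof -
  have "0 \<le> sf n A (\<lambda>i. v $ i) (\<lambda>i. v $ i)" using assms(1) unfolding psd_iff by blast
  also have "\<dots> = (A *\<^sub>v v) \<bullet>c v" using sf_vec[OF psd_carrier[OF assms(1)]] vec_eta[OF v] by simp
  finally show ?thesis .
qed

lemma proj_psd: assumes P: "proj_mat n P" shows "psd_mat n P"
  unfolding psd_iff
proof (intro conjI allI)
  show "hermitian_mat n P" using P by (rule proj_herm)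
  fix a
  have Pc: "P \<in> carrier_mat n n" using P by (rule proj_carrier)
  have "sf n P a a = (P *\<^sub>v vec n a) \<bullet>c vec n a" by (rule sf_vec[OF Pc])
  also have "\<dots> = (P *\<^sub>v vec n a) \<bullet>c (P *\<^sub>v vec n a)" by (rule proj_sq[OF P]) simp
  finally show "0 \<le> sf n P a a" by (simp add: conjugate_square_ge_0_vec)
qed

lemma zero_proj: "proj_mat n (0\<^sub>m n n)"
  unfolding proj_mat_def by (auto intro!: eq_matI simp: adj_dims)

lemma proj_comm: assumes P: "proj_mat n P" and Q: "proj_mat n Q" and QP: "Q * P = P"
  shows "P * Q = P"
proof -
  have "P = mat_adjoint P" using proj_adj[OF P] by simp
  also have "\<dots> = mat_adjoint (Q * P)" using QP by simp
  also have "\<dots> = mat_adjoint P * mat_adjoint Q" by (rule adj_mult[OF proj_carrier[OF Q] proj_carrier[OF P]])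
  also have "\<dots> = P * Q" using proj_adj[OF P] proj_adj[OF Q] by simp
  finally show ?thesis by simp
qed

lemma proj_diff: assumes P: "proj_mat n P" and Q: "proj_mat n Q" and QP: "Q * P = P"
  shows "proj_mat n (Q - P)"
proof -
  have Pc: "P \<in> carrier_mat n n" using P by (rule proj_carrier)
  have Qc: "Q \<in> carrier_mat n n" using Q by (rule proj_carrier)
  have PQ: "P * Q = P" by (rule proj_comm[OF P Q QP])
  have PP: "P * P = P" and QQ: "Q * Q = Q" using P Q by (auto simp: proj_idem)
  have hP: "hermitian_mat n P" and hQ: "hermitian_mat n Q" using P Q by (auto simp: proj_herm)
  have h: "hermitian_mat n (Q - P)" unfolding herm_iff
  proof (intro conjI allI impI)
    show "Q - P \<in> carrier_mat n n" using Pc Qc by simp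
    fix i j assume ij: "i < n" "j < n"
    then show "(Q - P) $$ (i, j) = cnj ((Q - P) $$ (j, i))"
      using Pc Qc by (simp add: herm_cnj[OF hP] herm_cnj[OF hQ])
  qed
  have sq: "(Q - P) * (Q - P) = Q - P"
  proof (rule eq_matI)
    show "dim_row ((Q - P) * (Q - P)) = dim_row (Q - P)" "dim_col ((Q - P) * (Q - P)) = dim_col (Q - P)"
      using Pc Qc by auto
    fix i j assume "i < dim_row (Q - P)" "j < dim_col (Q - P)"
    then have ij: "i < n" "j < n" using Pc Qc by auto
    have e: "\<And>A B. A \<in> carrier_mat n n \<Longrightarrow> B \<in> carrier_mat n n \<Longrightarrow> (A * B) $$ (i,j) = (\<Sum>l<n. A $$ (i,l) * B $$ (l,j))"
      using ij by (intro mult_idx) auto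
    have "((Q - P) * (Q - P)) $$ (i,j) = (\<Sum>l<n. (Q $$ (i,l) - P $$ (i,l)) * (Q $$ (l,j) - P $$ (l,j)))"
      using Pc Qc ij by (simp add: rowcol_dot[of _ n n _ n])
    also have "\<dots> = (\<Sum>l<n. Q $$ (i,l) * Q $$ (l,j)) - (\<Sum>l<n. Q $$ (i,l) * P $$ (l,j))
                   - (\<Sum>l<n. P $$ (i,l) * Q $$ (l,j)) + (\<Sum>l<n. P $$ (i,l) * P $$ (l,j))"
      by (simp add: algebra_simps sum_subtractf sum.distrib)
    also have "\<dots> = (Q * Q) $$ (i,j) - (Q * P) $$ (i,j) - (P * Q) $$ (i,j) + (P * P) $$ (i,j)"
      using Pc Qc ij by (simp add: rowcol_dot[of _ n n _ n])
    also have "\<dots> = (Q - P) $$ (i,j)" unfolding PP QQ PQ QP using Pc Qc ij by simp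
    finally show "((Q - P) * (Q - P)) $$ (i,j) = (Q - P) $$ (i,j)" .
  qed
  show ?thesis unfolding proj_mat_def using h sq unfolding hermitian_mat_def by blast
qed

lemma le_of_mult: assumes P: "proj_mat n P" and Q: "proj_mat n Q" and QP: "Q * P = P"
  shows "loewner_le n P Q"
  unfolding loewner_le_def using proj_carrier[OF P] proj_carrier[OF Q] proj_psd[OF proj_diff[OF P Q QP]]
  by blast

lemma mult_of_le: assumes P: "proj_mat n P" and Q: "proj_mat n Q" and le: "loewner_le n P Q"
  shows "Q * P = P"
proof -
  have Pc: "P \<in> carrier_mat n n" using P by (rule proj_carrier)
  have Qc: "Q \<in> carrier_mat n n" using Q by (rule proj_carrier)
  have M: "psd_mat n (Q - P)" using le unfolding loewner_le_def by blast
  have key: "P *\<^sub>v v = (P * Q) *\<^sub>v v" if v: "v \<in> carrier_vec n" for v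
  proof -
    define z where "z = v - Q *\<^sub>v v"
    have zc: "z \<in> carrier_vec n" using v Qc by (simp add: z_def)
    have Qz: "Q *\<^sub>v z = 0\<^sub>v n"
      unfolding z_def using Qc v by (simp add: mult_minus_distrib_mat_vec proj_idem_vec[OF Q v] vsub_self)
    have Mz: "(Q - P) *\<^sub>v z = - (P *\<^sub>v z)"
      using Pc Qc zc by (simp add: minus_mult_distrib_mat_vec Qz)
    have "0 \<le> ((Q - P) *\<^sub>v z) \<bullet>c z" by (rule psd_vec[OF M zc])
    also have "\<dots> = - ((P *\<^sub>v z) \<bullet>c z)" unfolding Mz using Pc zc
      uminus_scalar_prod[of "P *\<^sub>v z" n "conjugate z"] by simp
    also have "(P *\<^sub>v z) \<bullet>c z = (P *\<^sub>v z) \<bullet>c (P *\<^sub>v z)" by (rule proj_sq[OF P zc])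
    finally have le0: "(P *\<^sub>v z) \<bullet>c (P *\<^sub>v z) \<le> 0" by simp
    have ge0: "0 \<le> (P *\<^sub>v z) \<bullet>c (P *\<^sub>v z)" by (rule conjugate_square_ge_0_vec)
    have "(P *\<^sub>v z) \<bullet>c (P *\<^sub>v z) = 0" using le0 ge0 by (rule antisym)
    then have Pz: "P *\<^sub>v z = 0\<^sub>v n" using conjugate_square_eq_0_vec[of "P *\<^sub>v z" n] Pc zc by simp
    have "P *\<^sub>v z = P *\<^sub>v v - P *\<^sub>v (Q *\<^sub>v v)" unfolding z_def using Pc Qc v
      by (simp add: mult_minus_distrib_mat_vec)
    then have "P *\<^sub>v v - P *\<^sub>v (Q *\<^sub>v v) = 0\<^sub>v n" using Pz by simp
    then have "P *\<^sub>v v = P *\<^sub>v (Q *\<^sub>v v)" by (rule vsub_eq0[rotated 2]) (use Pc Qc v in auto)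
    then show ?thesis using Pc Qc v by (simp add: assoc_mult_mat_vec)
  qed
  have PQ: "P = P * Q" using Pc Qc by (intro mat_ext[OF Pc]) (auto simp: key)
  have "P = mat_adjoint P" using proj_adj[OF P] by simp
  also have "\<dots> = mat_adjoint (P * Q)" using PQ by simp
  also have "\<dots> = mat_adjoint Q * mat_adjoint P" by (rule adj_mult[OF Pc Qc])
  also have "\<dots> = Q * P" using proj_adj[OF P] proj_adj[OF Q] by simp
  finally show ?thesis by simp
qed

lemma range_sub_iff: assumes Q: "proj_mat n Q" and Pc: "P \<in> carrier_mat n n"
  shows "mat_range n P \<subseteq> mat_range n Q \<longleftrightarrow> Q * P = P"
proof
  have Qc: "Q \<in> carrier_mat n n" using Q by (rule proj_carrier)
  assume sub: "mat_range n P \<subseteq> mat_range n Q"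
  show "Q * P = P"
  proof (rule mat_ext)
    show "Q * P \<in> carrier_mat n n" using Qc Pc by simp
    show "P \<in> carrier_mat n n" by fact
    fix v :: "complex vec" assume v: "v \<in> carrier_vec n"
    have "P *\<^sub>v v \<in> mat_range n P" unfolding mat_range_def using v by blast
    then obtain w where w: "w \<in> carrier_vec n" "P *\<^sub>v v = Q *\<^sub>v w" using sub unfolding mat_range_def by blast
    have "(Q * P) *\<^sub>v v = Q *\<^sub>v (P *\<^sub>v v)" using Qc Pc v by (simp add: assoc_mult_mat_vec)
    also have "\<dots> = Q *\<^sub>v (Q *\<^sub>v w)" using w by simp
    also have "\<dots> = Q *\<^sub>v w" by (rule proj_idem_vec[OF Q w(1)])
    finally show "(Q * P) *\<^sub>v v = P *\<^sub>v v" using w by simp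
  qed
next
  have Qc: "Q \<in> carrier_mat n n" using Q by (rule proj_carrier)
  assume QP: "Q * P = P"
  show "mat_range n P \<subseteq> mat_range n Q"
  proof
    fix x assume "x \<in> mat_range n P"
    then obtain v where v: "v \<in> carrier_vec n" "x = P *\<^sub>v v" unfolding mat_range_def by blast
    have "x = (Q * P) *\<^sub>v v" using QP v by simp
    also have "\<dots> = Q *\<^sub>v (P *\<^sub>v v)" using Qc Pc v by (simp add: assoc_mult_mat_vec)
    finally show "x \<in> mat_range n Q" unfolding mat_range_def using Pc v by auto
  qed
qed

lemma proj_unique: assumes P: "proj_mat n P" and P': "proj_mat n P'" and r: "mat_range n P = mat_range n P'"
  shows "P = P'"
proof -
  have a: "P' * P = P" using range_sub_iff[OF P' proj_carrier[OF P]] r by simp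
  have b: "P * P' = P'" using range_sub_iff[OF P proj_carrier[OF P']] r by simp
  have "P = mat_adjoint P" using proj_adj[OF P] by simp
  also have "\<dots> = mat_adjoint (P' * P)" using a by simp
  also have "\<dots> = mat_adjoint P * mat_adjoint P'" by (rule adj_mult[OF proj_carrier[OF P'] proj_carrier[OF P]])
  also have "\<dots> = P * P'" using proj_adj[OF P] proj_adj[OF P'] by simp
  finally show ?thesis using b by simp
qed


lemma va1: fixes A :: "complex mat" assumes A: "A \<in> carrier_mat n n" and a: "a \<in> carrier_vec n" and b: "b \<in> carrier_vec n"
  shows "A *\<^sub>v (a + c \<cdot>\<^sub>v b) = A *\<^sub>v a + c \<cdot>\<^sub>v (A *\<^sub>v b)"
  using A a b by (intro eq_vecI) (auto simp: row_dot[of _ n n] algebra_simps sum.distrib sum_distrib_left)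

lemma va2: fixes a b w :: "complex vec" assumes a: "a \<in> carrier_vec n" and b: "b \<in> carrier_vec n" and w: "w \<in> carrier_vec n"
  shows "(a + c \<cdot>\<^sub>v b) \<bullet>c w = a \<bullet>c w + c * (b \<bullet>c w)"
  using a b w by (simp add: cscalar_def'[of _ n] algebra_simps sum.distrib sum_distrib_left)

lemma va3: fixes a :: "complex vec" shows "a \<in> carrier_vec n \<Longrightarrow> a + c \<cdot>\<^sub>v 0\<^sub>v n = a"
  by (intro eq_vecI) auto

lemma cs_zero: fixes z :: "complex vec" shows "z \<in> carrier_vec n \<Longrightarrow> z \<bullet>c 0\<^sub>v n = 0"
  by simp

lemma opm_app: fixes P :: "complex mat" assumes P: "P \<in> carrier_mat n n" and w: "w \<in> carrier_vec n" and z: "z \<in> carrier_vec n"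
  shows "(P + c \<cdot>\<^sub>m opm n w) *\<^sub>v z = P *\<^sub>v z + (c * (z \<bullet>c w)) \<cdot>\<^sub>v w"
  using P w z by (intro eq_vecI) (auto simp: row_dot[of _ n n] cscalar_def'[of _ n] algebra_simps sum.distrib sum_distrib_left sum_distrib_right)

lemma nonneg_cnj: "0 \<le> (c::complex) \<Longrightarrow> cnj c = c"
  by (simp add: less_eq_complex_def complex_eq_iff)

lemma ps_step:
  assumes P: "proj_mat n P" and w: "w \<in> carrier_vec n" and w0: "w \<noteq> 0\<^sub>v n" and Pw: "P *\<^sub>v w = 0\<^sub>v n"
  shows "proj_mat n (P + (1 / (w \<bullet>c w)) \<cdot>\<^sub>m opm n w)"
proof -
  define N where "N = w \<bullet>c w"
  define c where "c = 1 / N"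
  have N0: "N \<noteq> 0" unfolding N_def using w w0 by simp
  have cN: "c * N = 1" using N0 by (simp add: c_def)
  have cc: "cnj c = c" unfolding c_def N_def using conjugate_square_ge_0_vec[of w] nonneg_cnj by simp
  have Pc: "P \<in> carrier_mat n n" using P by (rule proj_carrier)
  have hP: "hermitian_mat n P" using P by (rule proj_herm)
  define P' where "P' = P + c \<cdot>\<^sub>m opm n w"
  have P'c: "P' \<in> carrier_mat n n" unfolding P'_def using Pc by simp
  have app: "P' *\<^sub>v z = P *\<^sub>v z + (c * (z \<bullet>c w)) \<cdot>\<^sub>v w" if "z \<in> carrier_vec n" for z
    unfolding P'_def by (rule opm_app[OF Pc w that])
  have h: "hermitian_mat n P'" unfolding herm_iff
  proof (intro conjI allI impI P'c)
    fix i k assume ik: "i < n" "k < n"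
    have "cnj (P' $$ (k,i)) = cnj (P $$ (k,i)) + cnj c * cnj (w $ k * cnj (w $ i))"
      unfolding P'_def using Pc ik by simp
    also have "\<dots> = P $$ (i,k) + c * (w $ i * cnj (w $ k))"
      using ik by (simp add: herm_cnj[OF hP] cc mult.commute)
    also have "\<dots> = P' $$ (i,k)" unfolding P'_def using Pc ik by simp
    finally show "P' $$ (i,k) = cnj (P' $$ (k,i))" by simp
  qed
  have idem: "P' * P' = P'"
  proof (rule mat_ext)
    show "P' * P' \<in> carrier_mat n n" using P'c by simp
    show "P' \<in> carrier_mat n n" by (rule P'c)
    fix z :: "complex vec" assume z: "z \<in> carrier_vec n"
    define \<alpha> where "\<alpha> = c * (z \<bullet>c w)"
    have Pzc: "P *\<^sub>v z \<in> carrier_vec n" using Pc z by simp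
    have yc: "P *\<^sub>v z + \<alpha> \<cdot>\<^sub>v w \<in> carrier_vec n" using Pzc w by simp
    have e1: "P *\<^sub>v (P *\<^sub>v z + \<alpha> \<cdot>\<^sub>v w) = P *\<^sub>v z"
      unfolding va1[OF Pc Pzc w] proj_idem_vec[OF P z] Pw using Pzc by (rule va3)
    have Pzw: "(P *\<^sub>v z) \<bullet>c w = 0"
      using herm_move[OF hP z w] Pw z by simp
    have e2: "(P *\<^sub>v z + \<alpha> \<cdot>\<^sub>v w) \<bullet>c w = \<alpha> * N"
      unfolding va2[OF Pzc w w] Pzw N_def by simp
    have "(P' * P') *\<^sub>v z = P' *\<^sub>v (P' *\<^sub>v z)" using P'c z by (simp add: assoc_mult_mat_vec)
    also have "\<dots> = P' *\<^sub>v (P *\<^sub>v z + \<alpha> \<cdot>\<^sub>v w)" unfolding app[OF z] \<alpha>_def ..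
    also have "\<dots> = P *\<^sub>v z + (c * (\<alpha> * N)) \<cdot>\<^sub>v w" unfolding app[OF yc] e1 e2 ..
    also have "c * (\<alpha> * N) = \<alpha>" using cN by (simp add: mult_ac)
    also have "P *\<^sub>v z + \<alpha> \<cdot>\<^sub>v w = P' *\<^sub>v z" unfolding app[OF z] \<alpha>_def ..
    finally show "(P' * P') *\<^sub>v z = P' *\<^sub>v z" .
  qed
  have "proj_mat n P'" unfolding proj_mat_def using P'c idem h unfolding hermitian_mat_def by blast
  then show ?thesis unfolding P'_def c_def N_def .
qed

lemma range_add: fixes X :: "complex mat" assumes X: "X \<in> carrier_mat n n"
  and a: "a \<in> mat_range n X" and b: "b \<in> mat_range n X" shows "a + c \<cdot>\<^sub>v b \<in> mat_range n X"
proof -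
  obtain a' where a': "a' \<in> carrier_vec n" "a = X *\<^sub>v a'" using a unfolding mat_range_def by blast
  obtain b' where b': "b' \<in> carrier_vec n" "b = X *\<^sub>v b'" using b unfolding mat_range_def by blast
  have "a + c \<cdot>\<^sub>v b = X *\<^sub>v (a' + c \<cdot>\<^sub>v b')" using va1[OF X a'(1) b'(1)] a' b' by simp
  moreover have "a' + c \<cdot>\<^sub>v b' \<in> carrier_vec n" using a' b' by simp
  ultimately show ?thesis unfolding mat_range_def by blast
qed

lemma range_sub: fixes X :: "complex mat" assumes X: "X \<in> carrier_mat n n"
  and a: "a \<in> mat_range n X" and b: "b \<in> mat_range n X" shows "a - b \<in> mat_range n X"
proof -
  have ac: "a \<in> carrier_vec n" and bc: "b \<in> carrier_vec n" using a b X unfolding mat_range_def by auto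
  have "a + (-1) \<cdot>\<^sub>v b \<in> mat_range n X" by (rule range_add[OF X a b])
  moreover have "a + (-1) \<cdot>\<^sub>v b = a - b" using ac bc by (intro eq_vecI) auto
  ultimately show ?thesis by simp
qed

lemma range_mem: "A \<in> carrier_mat n n \<Longrightarrow> v \<in> carrier_vec n \<Longrightarrow> A *\<^sub>v v \<in> mat_range n A"
  unfolding mat_range_def by blast

fun PS :: "nat \<Rightarrow> complex vec list \<Rightarrow> complex mat" where
  "PS n [] = 0\<^sub>m n n"
| "PS n (v # vs) = (let P = PS n vs; w = v - P *\<^sub>v v in
     if w = 0\<^sub>v n then P else P + (1 / (w \<bullet>c w)) \<cdot>\<^sub>m opm n w)"

lemma mv_zero: "(X :: complex mat) \<in> carrier_mat n n \<Longrightarrow> X *\<^sub>v 0\<^sub>v n = 0\<^sub>v n"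
  by (intro eq_vecI) (auto simp: row_dot[of _ n n])

lemma zero_mv: "v \<in> carrier_vec n \<Longrightarrow> (0\<^sub>m n n :: complex mat) *\<^sub>v v = 0\<^sub>v n"
  by (intro eq_vecI) (auto simp: row_dot[of _ n n])

lemma PS_props: assumes "set vs \<subseteq> carrier_vec n"
  shows "proj_mat n (PS n vs) \<and> (\<forall>v\<in>set vs. PS n vs *\<^sub>v v = v) \<and>
    (\<forall>R\<in>carrier_mat n n. (\<forall>v\<in>set vs. R *\<^sub>v v = v) \<longrightarrow> R * PS n vs = PS n vs) \<and>
    (\<forall>X\<in>carrier_mat n n. set vs \<subseteq> mat_range n X \<longrightarrow> mat_range n (PS n vs) \<subseteq> mat_range n X)"
  using assms
proof (induction vs)
  case Nil
  have r: "mat_range n (0\<^sub>m n n) \<subseteq> mat_range n X" if X: "X \<in> carrier_mat n n" for X :: "complex mat"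
  proof
    fix x assume "x \<in> mat_range n (0\<^sub>m n n)"
    then obtain v where v: "v \<in> carrier_vec n" "x = 0\<^sub>m n n *\<^sub>v v" unfolding mat_range_def by blast
    have "x = X *\<^sub>v 0\<^sub>v n" using v X by (simp add: zero_mv mv_zero)
    then show "x \<in> mat_range n X" unfolding mat_range_def by auto
  qed
  show ?case using zero_proj r by (auto simp: right_mult_zero_mat)
next
  case (Cons v vs)
  define P where "P = PS n vs"
  define w where "w = v - P *\<^sub>v v"
  have vc: "v \<in> carrier_vec n" and vsc: "set vs \<subseteq> carrier_vec n" using Cons.prems by auto
  have IH: "proj_mat n P" "\<forall>v\<in>set vs. P *\<^sub>v v = v"
    "\<forall>R\<in>carrier_mat n n. (\<forall>v\<in>set vs. R *\<^sub>v v = v) \<longrightarrow> R * P = P"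
    "\<forall>X\<in>carrier_mat n n. set vs \<subseteq> mat_range n X \<longrightarrow> mat_range n P \<subseteq> mat_range n X"
    using Cons.IH[OF vsc] unfolding P_def by auto
  have Pc: "P \<in> carrier_mat n n" using IH(1) by (rule proj_carrier)
  have hP: "hermitian_mat n P" using IH(1) by (rule proj_herm)
  have wc: "w \<in> carrier_vec n" unfolding w_def using vc Pc by simp
  have PSe: "PS n (v # vs) = (if w = 0\<^sub>v n then P else P + (1 / (w \<bullet>c w)) \<cdot>\<^sub>m opm n w)"
    by (simp add: P_def w_def Let_def)
  show ?case
  proof (cases "w = 0\<^sub>v n")
    case True
    have Pv: "P *\<^sub>v v = v" using vsub_eq0[of v n "P *\<^sub>v v"] vc Pc True unfolding w_def by simp
    have e: "PS n (v # vs) = P" using PSe True by simp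
    show ?thesis unfolding e using IH Pv by auto
  next
    case False
    define N where "N = w \<bullet>c w"
    define c where "c = 1 / N"
    have N0: "N \<noteq> 0" unfolding N_def using wc False by simp
    have cN: "c * N = 1" using N0 by (simp add: c_def)
    have Pvc: "P *\<^sub>v v \<in> carrier_vec n" using Pc vc by simp
    have Pw: "P *\<^sub>v w = 0\<^sub>v n"
      unfolding w_def using Pc vc by (simp add: mult_minus_distrib_mat_vec proj_idem_vec[OF IH(1) vc] vsub_self)
    have e: "PS n (v # vs) = P + c \<cdot>\<^sub>m opm n w" using PSe False by (simp add: c_def N_def)
    have app: "(P + c \<cdot>\<^sub>m opm n w) *\<^sub>v z = P *\<^sub>v z + (c * (z \<bullet>c w)) \<cdot>\<^sub>v w" if "z \<in> carrier_vec n" for z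
      by (rule opm_app[OF Pc wc that])
    have orth: "(P *\<^sub>v y) \<bullet>c w = 0" if "y \<in> carrier_vec n" for y
      using herm_move[OF hP that wc] Pw that by simp
    have p1: "proj_mat n (P + c \<cdot>\<^sub>m opm n w)"
      using ps_step[OF IH(1) wc False Pw] by (simp add: c_def N_def)
    have vw: "v = w + 1 \<cdot>\<^sub>v (P *\<^sub>v v)" unfolding w_def using vc Pvc Pc by (intro eq_vecI) auto
    have vdotw: "v \<bullet>c w = N"
    proof -
      have "v \<bullet>c w = (w + 1 \<cdot>\<^sub>v (P *\<^sub>v v)) \<bullet>c w" using vw by simp
      also have "\<dots> = N" unfolding va2[OF wc Pvc wc] orth[OF vc] N_def by simp
      finally show ?thesis .
    qed
    have fixv: "(P + c \<cdot>\<^sub>m opm n w) *\<^sub>v v = v"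
    proof -
      have "(P + c \<cdot>\<^sub>m opm n w) *\<^sub>v v = P *\<^sub>v v + (c * N) \<cdot>\<^sub>v w" unfolding app[OF vc] vdotw ..
      also have "\<dots> = v" unfolding cN w_def using vc Pvc Pc by (intro eq_vecI) auto
      finally show ?thesis .
    qed
    have fixvs: "(P + c \<cdot>\<^sub>m opm n w) *\<^sub>v u = u" if u: "u \<in> set vs" for u
    proof -
      have uc: "u \<in> carrier_vec n" using u vsc by auto
      have Pu: "P *\<^sub>v u = u" using IH(2) u by auto
      have "u \<bullet>c w = 0" using orth[OF uc] Pu by simp
      then show ?thesis unfolding app[OF uc] Pu using uc wc by (intro eq_vecI) auto
    qed
    have least: "R * (P + c \<cdot>\<^sub>m opm n w) = P + c \<cdot>\<^sub>m opm n w"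
      if R: "R \<in> carrier_mat n n" and Rf: "\<forall>u\<in>set (v # vs). R *\<^sub>v u = u" for R
    proof (rule mat_ext)
      show "R * (P + c \<cdot>\<^sub>m opm n w) \<in> carrier_mat n n" "P + c \<cdot>\<^sub>m opm n w \<in> carrier_mat n n"
        using R Pc by simp_all
      have RP: "R * P = P" using IH(3) R Rf by auto
      have Rv: "R *\<^sub>v v = v" using Rf by auto
      have RPv: "R *\<^sub>v (P *\<^sub>v v) = P *\<^sub>v v" using RP R Pc vc by (metis assoc_mult_mat_vec)
      have Rw: "R *\<^sub>v w = w" unfolding w_def using R vc Pvc by (simp add: mult_minus_distrib_mat_vec Rv RPv)
      fix z :: "complex vec" assume z: "z \<in> carrier_vec n"
      have Pzc: "P *\<^sub>v z \<in> carrier_vec n" using Pc z by simp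
      have RPz: "R *\<^sub>v (P *\<^sub>v z) = P *\<^sub>v z" using RP R Pc z by (metis assoc_mult_mat_vec)
      have "(R * (P + c \<cdot>\<^sub>m opm n w)) *\<^sub>v z = R *\<^sub>v ((P + c \<cdot>\<^sub>m opm n w) *\<^sub>v z)"
        by (rule assoc_mult_mat_vec[OF R _ z]) (use Pc in simp)
      also have "\<dots> = (P + c \<cdot>\<^sub>m opm n w) *\<^sub>v z"
        unfolding app[OF z] va1[OF R Pzc wc] RPz Rw ..
      finally show "(R * (P + c \<cdot>\<^sub>m opm n w)) *\<^sub>v z = (P + c \<cdot>\<^sub>m opm n w) *\<^sub>v z" .
    qed
    have rng: "mat_range n (P + c \<cdot>\<^sub>m opm n w) \<subseteq> mat_range n X"
      if X: "X \<in> carrier_mat n n" and sub: "set (v # vs) \<subseteq> mat_range n X" for X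
    proof
      have PX: "mat_range n P \<subseteq> mat_range n X" using IH(4) X sub by auto
      have vX: "v \<in> mat_range n X" using sub by auto
      have PvX: "P *\<^sub>v v \<in> mat_range n X" using PX range_mem[OF Pc vc] by auto
      have wX: "w \<in> mat_range n X" unfolding w_def by (rule range_sub[OF X vX PvX])
      fix x assume "x \<in> mat_range n (P + c \<cdot>\<^sub>m opm n w)"
      then obtain z where z: "z \<in> carrier_vec n" "x = (P + c \<cdot>\<^sub>m opm n w) *\<^sub>v z" unfolding mat_range_def by blast
      have PzX: "P *\<^sub>v z \<in> mat_range n X" using PX range_mem[OF Pc z(1)] by auto
      show "x \<in> mat_range n X" unfolding z(2) app[OF z(1)] by (rule range_add[OF X PzX wX])
    qed
    show ?thesis unfolding e using p1 fixv fixvs least rng by auto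
  qed
qed


lemma col_range: fixes x :: "complex mat" assumes xc: "x \<in> carrier_mat n n" and j: "j < n"
  shows "col x j \<in> mat_range n x"
proof -
  have "col x j = x *\<^sub>v unit_vec n j" using xc j by (intro eq_vecI) auto
  then show ?thesis unfolding mat_range_def by auto
qed

lemma set_cols: "x \<in> carrier_mat n n \<Longrightarrow> set (cols x) = {col x j | j. j < n}"
  unfolding cols_def by auto

lemma cols_carrier: "P \<in> carrier_mat n n \<Longrightarrow> v \<in> set (cols P) \<Longrightarrow> v \<in> carrier_vec n"
  by (auto simp: set_cols)

lemma fix_cols: fixes A B :: "complex mat" assumes A: "A \<in> carrier_mat n n" and B: "B \<in> carrier_mat n n"
  and f: "\<And>j. j < n \<Longrightarrow> A *\<^sub>v col B j = col B j" shows "A * B = B"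
proof (rule eq_matI)
  show "dim_row (A * B) = dim_row B" "dim_col (A * B) = dim_col B" using A B by auto
  fix i j assume "i < dim_row B" "j < dim_col B"
  then have ij: "i < n" "j < n" using B by auto
  have "(A * B) $$ (i,j) = (A *\<^sub>v col B j) $ i" using A B ij by simp
  also have "\<dots> = col B j $ i" using f[OF ij(2)] by simp
  also have "\<dots> = B $$ (i,j)" using B ij by simp
  finally show "(A * B) $$ (i,j) = B $$ (i,j)" .
qed

lemma fixes_cols: fixes A B :: "complex mat" assumes A: "A \<in> carrier_mat n n" and B: "B \<in> carrier_mat n n"
  and AB: "A * B = B" and j: "j < n" shows "A *\<^sub>v col B j = col B j"
  using col_mult2[OF A B j] AB by simp

lemma proj_antisym: assumes A: "proj_mat n A" and B: "proj_mat n B"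
  and ab: "loewner_le n A B" and ba: "loewner_le n B A" shows "A = B"
proof -
  have "B * A = A" by (rule mult_of_le[OF A B ab])
  then have r1: "mat_range n A \<subseteq> mat_range n B" using range_sub_iff[OF B proj_carrier[OF A]] by simp
  have "A * B = B" by (rule mult_of_le[OF B A ba])
  then have r2: "mat_range n B \<subseteq> mat_range n A" using range_sub_iff[OF A proj_carrier[OF B]] by simp
  show ?thesis using proj_unique[OF A B] r1 r2 by blast
qed

lemma supp_props: assumes xc: "x \<in> carrier_mat n n"
  shows "proj_mat n (supp n x) \<and> mat_range n (supp n x) = mat_range n x"
proof -
  define P where "P = PS n (cols x)"
  have sc: "set (cols x) \<subseteq> carrier_vec n" using xc by (auto simp: set_cols)
  have props: "proj_mat n P" "\<forall>v\<in>set (cols x). P *\<^sub>v v = v"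
    "\<forall>X\<in>carrier_mat n n. set (cols x) \<subseteq> mat_range n X \<longrightarrow> mat_range n P \<subseteq> mat_range n X"
    using PS_props[OF sc] unfolding P_def by auto
  have sr: "set (cols x) \<subseteq> mat_range n x" using xc col_range[OF xc] by (auto simp: set_cols)
  have r1: "mat_range n P \<subseteq> mat_range n x" using props(3) xc sr by blast
  have Px: "P * x = x"
  proof (rule fix_cols[OF proj_carrier[OF props(1)] xc])
    fix j assume "j < n"
    then have "col x j \<in> set (cols x)" using xc by (auto simp: set_cols)
    then show "P *\<^sub>v col x j = col x j" using props(2) by blast
  qed
  have r2: "mat_range n x \<subseteq> mat_range n P" using range_sub_iff[OF props(1) xc] Px by simp
  have ex: "\<exists>!Q. proj_mat n Q \<and> mat_range n Q = mat_range n x"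
  proof (rule ex1I[of _ P])
    show "proj_mat n P \<and> mat_range n P = mat_range n x" using props(1) r1 r2 by blast
    fix Q assume "proj_mat n Q \<and> mat_range n Q = mat_range n x"
    then show "Q = P" using proj_unique[of n Q P] props(1) r1 r2 by blast
  qed
  show ?thesis unfolding supp_def by (rule theI'[OF ex])
qed

lemma join_props: assumes fin: "finite S" and pr: "\<forall>P\<in>S. proj_mat n P"
  shows "proj_mat n (proj_join n S) \<and> (\<forall>P\<in>S. loewner_le n P (proj_join n S)) \<and>
    (\<forall>R. proj_mat n R \<and> (\<forall>P\<in>S. loewner_le n P R) \<longrightarrow> loewner_le n (proj_join n S) R)"
proof -
  obtain Ps where Ps: "set Ps = S" using finite_list[OF fin] by blast
  define vs where "vs = concat (map cols Ps)"
  have setvs: "set vs = (\<Union>P\<in>S. set (cols P))" unfolding vs_def using Ps by auto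
  have Pc: "\<And>P. P \<in> S \<Longrightarrow> P \<in> carrier_mat n n" using pr proj_carrier by blast
  have sc: "set vs \<subseteq> carrier_vec n" unfolding setvs using Pc cols_carrier by blast
  define Q where "Q = PS n vs"
  have props: "proj_mat n Q" "\<forall>v\<in>set vs. Q *\<^sub>v v = v"
    "\<forall>R\<in>carrier_mat n n. (\<forall>v\<in>set vs. R *\<^sub>v v = v) \<longrightarrow> R * Q = Q"
    using PS_props[OF sc] unfolding Q_def by auto
  have Qc: "Q \<in> carrier_mat n n" using props(1) by (rule proj_carrier)
  have ub: "loewner_le n P Q" if P: "P \<in> S" for P
  proof -
    have "Q * P = P"
    proof (rule fix_cols[OF Qc Pc[OF P]])
      fix j assume "j < n"
      then have "col P j \<in> set (cols P)" using Pc[OF P] by (auto simp: set_cols)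
      then have "col P j \<in> set vs" unfolding setvs using P by blast
      then show "Q *\<^sub>v col P j = col P j" using props(2) by blast
    qed
    then show ?thesis using le_of_mult[of n P Q] pr P props(1) by blast
  qed
  have least: "loewner_le n Q R" if R: "proj_mat n R" and Rub: "\<forall>P\<in>S. loewner_le n P R" for R
  proof -
    have Rc: "R \<in> carrier_mat n n" using R by (rule proj_carrier)
    have "\<forall>v\<in>set vs. R *\<^sub>v v = v"
    proof
      fix v assume "v \<in> set vs"
      then obtain P where P: "P \<in> S" and vP: "v \<in> set (cols P)" unfolding setvs by blast
      then obtain j where j: "j < n" and v: "v = col P j" using Pc[OF P] by (auto simp: set_cols)
      have "R * P = P" using mult_of_le[of n P R] pr P R Rub by blast
      then show "R *\<^sub>v v = v" unfolding v by (rule fixes_cols[OF Rc Pc[OF P] _ j])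
    qed
    then have "R * Q = Q" using props(3) Rc by blast
    then show ?thesis by (rule le_of_mult[OF props(1) R])
  qed
  have spec: "proj_mat n Q \<and> (\<forall>P\<in>S. loewner_le n P Q) \<and>
      (\<forall>R. proj_mat n R \<and> (\<forall>P\<in>S. loewner_le n P R) \<longrightarrow> loewner_le n Q R)"
    using props(1) ub least by blast
  have ex: "\<exists>!J. proj_mat n J \<and> (\<forall>P\<in>S. loewner_le n P J) \<and>
      (\<forall>R. proj_mat n R \<and> (\<forall>P\<in>S. loewner_le n P R) \<longrightarrow> loewner_le n J R)"
  proof (rule ex1I[of _ Q])
    show "proj_mat n Q \<and> (\<forall>P\<in>S. loewner_le n P Q) \<and>
      (\<forall>R. proj_mat n R \<and> (\<forall>P\<in>S. loewner_le n P R) \<longrightarrow> loewner_le n Q R)" by (rule spec)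
    fix J assume J: "proj_mat n J \<and> (\<forall>P\<in>S. loewner_le n P J) \<and>
      (\<forall>R. proj_mat n R \<and> (\<forall>P\<in>S. loewner_le n P R) \<longrightarrow> loewner_le n J R)"
    have "loewner_le n J Q" using J spec by blast
    moreover have "loewner_le n Q J" using J spec by blast
    ultimately show "J = Q" using proj_antisym[of n J Q] J props(1) by blast
  qed
  show ?thesis unfolding proj_join_def by (rule theI'[OF ex])
qed


theorem proposition4p20:
  fixes d :: nat and T :: "complex mat \<Rightarrow> complex mat"
  assumes cp: "completely_positive d T"
    and subunital: "loewner_le d (T (1\<^sub>m d)) (1\<^sub>m d)"
    and fin: "finite_stab_index d T"
    and faithful_proj: "\<forall>p. proj_mat d p \<and> p \<noteq> 0\<^sub>m d d \<and> loewner_le d p (orbit_support d T)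
                          \<longrightarrow> T p \<noteq> 0\<^sub>m d d"
  shows "corner_faithful d T \<and> T (1\<^sub>m d) = 1\<^sub>m d"
proof -
  have L: "linear_map_mat d T" using cp by (rule cp_lin)
  define D where "D = defect d T"
  have T1c: "T (1\<^sub>m d) \<in> carrier_mat d d" by (rule lin_carrier[OF L]) simp
  have Dpsd: "psd_mat d D" using subunital unfolding loewner_le_def D_def defect_def by blast
  have Dc: "D \<in> carrier_mat d d" using Dpsd by (rule psd_carrier)
  have powc: "\<And>k. (T ^^ k) D \<in> carrier_mat d d" using lin_pow_carrier[OF L Dc] .
  have powpsd: "\<And>k. psd_mat d ((T ^^ k) D)" using cp_pow_psd[OF cp Dpsd] .
  define S where "S = {supp d ((T ^^ k) D) | k. k < stab_index d T}"
  have "S = (\<lambda>k. supp d ((T ^^ k) D)) ` {..<stab_index d T}" unfolding S_def by auto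
  then have Sfin: "finite S" by simp
  have Sproj: "\<forall>P\<in>S. proj_mat d P" unfolding S_def using supp_props[OF powc] by auto
  have OJ: "orbit_support d T = proj_join d S" unfolding orbit_support_def S_def D_def ..
  have JP: "proj_mat d (proj_join d S) \<and> (\<forall>P\<in>S. loewner_le d P (proj_join d S)) \<and>
    (\<forall>R. proj_mat d R \<and> (\<forall>P\<in>S. loewner_le d P R) \<longrightarrow> loewner_le d (proj_join d S) R)"
    by (rule join_props[OF Sfin Sproj])
  define J where "J = proj_join d S"
  have projJ: "proj_mat d J" using JP unfolding J_def by blast
  have Jc: "J \<in> carrier_mat d d" using projJ by (rule proj_carrier)
  have ubJ: "\<And>P. P \<in> S \<Longrightarrow> loewner_le d P J" using JP unfolding J_def by blast
  have leastJ: "\<And>R. proj_mat d R \<Longrightarrow> (\<forall>P\<in>S. loewner_le d P R) \<Longrightarrow> loewner_le d J R"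
    using JP unfolding J_def by blast
  have OJ': "orbit_support d T = J" using OJ unfolding J_def .
  have zero_of_le0: "Q = 0\<^sub>m d d" if Q: "proj_mat d Q" and le: "loewner_le d Q (0\<^sub>m d d)" for Q
  proof -
    have "0\<^sub>m d d * Q = Q" by (rule mult_of_le[OF Q zero_proj le])
    moreover have "0\<^sub>m d d * Q = 0\<^sub>m d d" using proj_carrier[OF Q] by (rule left_mult_zero_mat)
    ultimately show ?thesis by simp
  qed
  show ?thesis
  proof (cases "D = 0\<^sub>m d d")
    case True
    have unital: "T (1\<^sub>m d) = 1\<^sub>m d"
    proof (rule eq_matI)
      show "dim_row (T (1\<^sub>m d)) = dim_row (1\<^sub>m d)" "dim_col (T (1\<^sub>m d)) = dim_col (1\<^sub>m d)" using T1c by auto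
      fix i j assume "i < dim_row (1\<^sub>m d)" "j < dim_col (1\<^sub>m d)"
      then have ij: "i < d" "j < d" by auto
      have "D $$ (i,j) = 0" using True ij by simp
      moreover have "D $$ (i,j) = 1\<^sub>m d $$ (i,j) - T (1\<^sub>m d) $$ (i,j)"
        unfolding D_def defect_def using T1c ij by simp
      ultimately show "T (1\<^sub>m d) $$ (i,j) = 1\<^sub>m d $$ (i,j)" by simp
    qed
    have supp0: "supp d (0\<^sub>m d d) = 0\<^sub>m d d"
    proof -
      have sp: "proj_mat d (supp d (0\<^sub>m d d)) \<and> mat_range d (supp d (0\<^sub>m d d)) = mat_range d (0\<^sub>m d d)"
        by (rule supp_props) simp
      then show ?thesis using proj_unique[of d "supp d (0\<^sub>m d d)" "0\<^sub>m d d"] zero_proj by blast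
    qed
    have members: "P = 0\<^sub>m d d" if "P \<in> S" for P
      using that unfolding S_def True by (auto simp: lin_pow_zero[OF L] supp0)
    have l00: "loewner_le d (0\<^sub>m d d) (0\<^sub>m d d)" using le_of_mult[OF zero_proj zero_proj] by simp
    have "loewner_le d J (0\<^sub>m d d)" using leastJ[OF zero_proj] members l00 by auto
    then have J0: "J = 0\<^sub>m d d" by (rule zero_of_le0[OF projJ])
    have cf: "corner_faithful d T"
      unfolding corner_faithful_def
    proof (intro allI impI)
      fix x assume H: "psd_mat d x \<and> x \<noteq> 0\<^sub>m d d \<and> loewner_le d (supp d x) (orbit_support d T)"
      have xc: "x \<in> carrier_mat d d" using H psd_carrier by blast
      have sp: "proj_mat d (supp d x)" "mat_range d (supp d x) = mat_range d x"
        using supp_props[OF xc] by auto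
      have "loewner_le d (supp d x) (0\<^sub>m d d)" using H OJ' J0 by simp
      then have s0: "supp d x = 0\<^sub>m d d" by (rule zero_of_le0[OF sp(1)])
      have "x = 0\<^sub>m d d"
      proof (rule mat_ext[OF xc])
        show "0\<^sub>m d d \<in> carrier_mat d d" by simp
        fix v :: "complex vec" assume v: "v \<in> carrier_vec d"
        have "x *\<^sub>v v \<in> mat_range d x" by (rule range_mem[OF xc v])
        then have "x *\<^sub>v v \<in> mat_range d (0\<^sub>m d d)" using sp(2) s0 by simp
        then obtain w where w: "w \<in> carrier_vec d" "x *\<^sub>v v = 0\<^sub>m d d *\<^sub>v w" unfolding mat_range_def by blast
        show "x *\<^sub>v v = 0\<^sub>m d d *\<^sub>v v" using w v by (simp add: zero_mv)
      qed
      then show "T x \<noteq> 0\<^sub>m d d" using H by blast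
    qed
    show ?thesis using cf unital by blast
  next
    case False
    note Dn0 = this
    have contra: False
    proof -
      from fin obtain m where m: "m \<ge> 1" "(T ^^ m) D = 0\<^sub>m d d"
        unfolding finite_stab_index_def D_def by blast
      define nT where "nT = stab_index d T"
      have nT: "nT \<ge> 1 \<and> (T ^^ nT) D = 0\<^sub>m d d"
        unfolding nT_def stab_index_def D_def[symmetric] by (rule LeastI[of _ m]) (use m in blast)
      have nmin: "(T ^^ k) D \<noteq> 0\<^sub>m d d" if "1 \<le> k" "k < nT" for k
        using not_less_Least[of k "\<lambda>m. m \<ge> 1 \<and> (T ^^ m) D = 0\<^sub>m d d"] that
        unfolding nT_def stab_index_def D_def[symmetric] by blast
      define x where "x = (T ^^ (nT - 1)) D"
      have x0: "x \<noteq> 0\<^sub>m d d"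
      proof (cases "nT - 1 = 0")
        case True
        then show ?thesis unfolding x_def using Dn0 by simp
      next
        case False
        then show ?thesis unfolding x_def using nT by (intro nmin) auto
      qed
      have sn: "Suc (nT - 1) = nT" using nT by simp
      have "T x = (T ^^ Suc (nT - 1)) D" unfolding x_def by simp
      then have Tx: "T x = 0\<^sub>m d d" unfolding sn using nT by simp
      have xpsd: "psd_mat d x" unfolding x_def by (rule powpsd)
      have xc: "x \<in> carrier_mat d d" using xpsd by (rule psd_carrier)
      obtain j where j: "j < d" "0 < Re (x $$ (j,j))"
        using psd_nonzero[OF xpsd x0] by blast
      define u where "u = col x j"
      have uc: "u \<in> carrier_vec d" using xc j by (simp add: u_def)
      have uj: "u $ j = x $$ (j,j)" using xc j by (simp add: u_def)
      have u0: "u \<noteq> 0\<^sub>v d"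
      proof
        assume "u = 0\<^sub>v d"
        then have "x $$ (j,j) = 0" using uj j by simp
        then show False using j by simp
      qed
      define c where "c = 1 / (u \<bullet>c u)"
      define p where "p = PS d [u]"
      have wu: "u - 0\<^sub>m d d *\<^sub>v u = u" using uc by (intro eq_vecI) (auto simp: zero_mv)
      have pe: "p = c \<cdot>\<^sub>m opm d u"
        unfolding p_def c_def using wu u0 by (simp add: Let_def)
      have sr: "set [u] \<subseteq> mat_range d x" using col_range[OF xc j(1)] by (simp add: u_def)
      have pprops: "proj_mat d p" "p *\<^sub>v u = u" "mat_range d p \<subseteq> mat_range d x"
        using PS_props[of "[u]" d] uc xc sr unfolding p_def by auto
      have pc: "p \<in> carrier_mat d d" using pprops(1) by (rule proj_carrier)
      have p0: "p \<noteq> 0\<^sub>m d d"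
      proof
        assume "p = 0\<^sub>m d d"
        then have "p *\<^sub>v u = 0\<^sub>v d" using uc by (simp add: zero_mv)
        then show False using pprops(2) u0 by simp
      qed
      have Tp0: "T p = 0\<^sub>m d d"
      proof -
        define c1 where "c1 = x $$ (j,j) / (u \<bullet>c u)"
        have cs: "psd_mat d (c1 \<cdot>\<^sub>m x - p)"
          using cs_bound[OF xpsd j(1) j(2)] unfolding pe c1_def c_def u_def .
        have Tpsd: "psd_mat d (T p)" by (rule cp_psd[OF cp proj_psd[OF pprops(1)]])
        have Tpc: "T p \<in> carrier_mat d d" using Tpsd by (rule psd_carrier)
        have "T (c1 \<cdot>\<^sub>m x - p) = T (c1 \<cdot>\<^sub>m x) - T p" using xc pc by (intro lin_minus[OF L]) auto
        also have "\<dots> = c1 \<cdot>\<^sub>m 0\<^sub>m d d - T p" using lin_smult[OF L xc] Tx by simp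
        finally have e: "T (c1 \<cdot>\<^sub>m x - p) = c1 \<cdot>\<^sub>m 0\<^sub>m d d - T p" .
        have Mpsd: "psd_mat d (c1 \<cdot>\<^sub>m 0\<^sub>m d d - T p)" using cp_psd[OF cp cs] unfolding e .
        have z: "sf d (T p) a a = 0" for a
        proof -
          have "sf d (c1 \<cdot>\<^sub>m 0\<^sub>m d d - T p) a a = 0 * sf d (T p) a a + (-1) * sf d (T p) a a"
            by (rule sf_lin) (use Tpc in simp)
          then have e1: "sf d (c1 \<cdot>\<^sub>m 0\<^sub>m d d - T p) a a = - sf d (T p) a a" by simp
          have "0 \<le> sf d (c1 \<cdot>\<^sub>m 0\<^sub>m d d - T p) a a" using Mpsd unfolding psd_iff by blast
          then have g1: "0 \<le> - sf d (T p) a a" unfolding e1 .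
          have g2: "0 \<le> sf d (T p) a a" using Tpsd unfolding psd_iff by blast
          show ?thesis using g1 g2 by (auto simp: less_eq_complex_def complex_eq_iff)
        qed
        show ?thesis
        proof (rule psd_zero[OF Tpsd])
          fix i assume "i < d"
          then show "T p $$ (i,i) = 0" using z[of "dl i"] sf_dl[of i d i "T p"] by simp
        qed
      qed
      have nlt: "nT - 1 < nT" using nT by simp
      have sxS: "supp d x \<in> S" unfolding S_def x_def nT_def[symmetric] using nlt by blast
      have sx: "proj_mat d (supp d x)" "mat_range d (supp d x) = mat_range d x"
        using supp_props[OF xc] by auto
      have "J * supp d x = supp d x" by (rule mult_of_le[OF sx(1) projJ ubJ[OF sxS]])
      then have r1: "mat_range d (supp d x) \<subseteq> mat_range d J"
        using range_sub_iff[OF projJ proj_carrier[OF sx(1)]] by simp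
      have "mat_range d p \<subseteq> mat_range d J" using pprops(3) sx(2) r1 by blast
      then have "J * p = p" using range_sub_iff[OF projJ pc] by simp
      then have "loewner_le d p J" by (rule le_of_mult[OF pprops(1) projJ])
      then have "T p \<noteq> 0\<^sub>m d d" using faithful_proj pprops(1) p0 OJ' by blast
      then show False using Tp0 by simp
    qed
    then show ?thesis by blast
  qed
qed

end
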